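(* Let $N\geq1$ be an integer, $k>0$, $r>0$, and let $y^*$ be the unique zero in $(0,1)$ of $p_N(y):=1-(N+1)^2y^N+N(2N+3)y^{N+1}-N(N+1)y^{N+2}$. For every $y\in(0,y^*]$, let $\alpha:=r\widetilde{\mathcal F}_N(y)$ with $\widetilde{\mathcal F}_N(y):=\frac{y}{1-y}\big(1-(N+1)y^N+Ny^{N+1}\big)$, let $U$ be the equilibrium of $\dot U=F(U)$ given by $U_1=\frac1k\frac{y}{1-y}$, $U_2=r$, $U_3=r\frac{y^{N+1}}{1-y}((N+1)-Ny)$, $U_4=ry^N$, $U_{5+i}=r(1-y)y^i$ ($0\le i\le N$), and let $A=DF(U)$. Then $A$ has no purely imaginary eigenvalues, i.e. no eigenvalue of the form $i\omega$ with $\omega\in\mathbb{R}\setminus\{0\}$.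
   Context: The map $F:\mathbb{R}^{N+5}\to\mathbb{R}^{N+5}$ is defined by $F_1(U)=\alpha+U_3-kU_1U_2$, $F_2(U)=r-U_2$, $F_3(U)=-U_3+kU_1U_4+NkU_1U_{N+5}$, $F_4(U)=-U_4+kU_1U_{N+4}$, $F_5(U)=r-U_5-kU_1U_5$, $F_j(U)=-U_j+kU_1U_{j-1}-kU_1U_j$ for $6\le j\le N+5$. It is known that $p_N$ has exactly one zero in $(0,1)$. *)

theory Defs
  imports "HOL-Analysis.Derivative" "Jordan_Normal_Form.Char_Poly"
begin

(* States U in R^(N+5) are represented as functions nat => real, using the
   paper's 1-based indices 1..N+5 (values at other indices are irrelevant). *)

definition pN :: "nat \<Rightarrow> real \<Rightarrow> real" where
  "pN N y = 1 - (real N + 1)^2 * y^N + real N * (2 * real N + 3) * y^(N+1)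
            - real N * (real N + 1) * y^(N+2)"

definition FtildeN :: "nat \<Rightarrow> real \<Rightarrow> real" where
  "FtildeN N y = y / (1 - y) * (1 - (real N + 1) * y^N + real N * y^(N+1))"

definition Fmap :: "nat \<Rightarrow> real \<Rightarrow> real \<Rightarrow> real \<Rightarrow> (nat \<Rightarrow> real) \<Rightarrow> nat \<Rightarrow> real" where
  "Fmap N k r \<alpha> U j =
     (if j = 1 then \<alpha> + U 3 - k * U 1 * U 2
      else if j = 2 then r - U 2
      else if j = 3 then - U 3 + k * U 1 * U 4 + real N * k * U 1 * U (N+5)
      else if j = 4 then - U 4 + k * U 1 * U (N+4)
      else if j = 5 then r - U 5 - k * U 1 * U 5
      else if 6 \<le> j \<and> j \<le> N+5 then - U j + k * U 1 * U (j-1) - k * U 1 * U j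
      else 0)"

definition Ueq :: "nat \<Rightarrow> real \<Rightarrow> real \<Rightarrow> real \<Rightarrow> nat \<Rightarrow> real" where
  "Ueq N k r y j =
     (if j = 1 then (1/k) * (y / (1 - y))
      else if j = 2 then r
      else if j = 3 then r * (y^(N+1) / (1 - y)) * ((real N + 1) - real N * y)
      else if j = 4 then r * y^N
      else if 5 \<le> j \<and> j \<le> N+5 then r * (1 - y) * y^(j-5)
      else 0)"

(* Jacobian DF(U) as an (N+5)x(N+5) complex matrix; row i / column j of the
   0-based JNF matrix correspond to the paper's indices i+1 / j+1;
   entry = partial derivative of F_{i+1} w.r.t. U_{j+1} at U. *)
definition jacobian :: "nat \<Rightarrow> ((nat \<Rightarrow> real) \<Rightarrow> nat \<Rightarrow> real) \<Rightarrow> (nat \<Rightarrow> real) \<Rightarrow> complex mat" where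
  "jacobian n F U = mat n n (\<lambda>(i, j).
      complex_of_real (deriv (\<lambda>t. F (U(Suc j := t)) (Suc i)) (U (Suc j))))"

end

theory Submission
  imports Defs
begin


definition Jp :: "nat \<Rightarrow> real \<Rightarrow> (nat \<Rightarrow> real) \<Rightarrow> nat \<Rightarrow> nat \<Rightarrow> real" where
 "Jp N k U i m =
 (if i = 1 then (if m=1 then -k*U 2 else 0) + (if m=2 then -k*U 1 else 0) + (if m=3 then 1 else 0)
  else if i=2 then (if m=2 then -1 else 0)
  else if i=3 then (if m=1 then k*U 4 + real N*k*U(N+5) else 0) + (if m=3 then -1 else 0) + (if m=4 then k*U 1 else 0) + (if m=N+5 then real N*k*U 1 else 0)
  else if i=4 then (if m=1 then k*U(N+4) else 0) + (if m=4 then -1 else 0) + (if m=N+4 then k*U 1 else 0)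
  else if i=5 then (if m=1 then -k*U 5 else 0) + (if m=5 then -1-k*U 1 else 0)
  else if 6\<le>i \<and> i\<le>N+5 then (if m=1 then k*(U(i-1) - U i) else 0) + (if m=i-1 then k*U 1 else 0) + (if m=i then -1-k*U 1 else 0)
  else 0)"

lemma Fmap_affine:
  assumes "N \<ge> 1"
  shows "Fmap N k r al (U(m := t)) i = Fmap N k r al (U(m := 0)) i + Jp N k U i m * t"
proof -
  consider "i=1" | "i=2" | "i=3" | "i=4" | "i=5" | "6 \<le> i \<and> i \<le> N+5" | "i = 0 \<or> i > N+5" by linarith
  then show ?thesis
  proof cases
    case 1 then show ?thesis
      by (cases "m = 1"; cases "m = 2"; cases "m = 3"; simp add: Fmap_def Jp_def algebra_simps)
  next
    case 2 then show ?thesis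
      by (cases "m = 2"; simp add: Fmap_def Jp_def algebra_simps)
  next
    case 3 then show ?thesis using assms
      by (cases "m = 1"; cases "m = 3"; cases "m = 4"; cases "m = N+5"; simp add: Fmap_def Jp_def algebra_simps)
  next
    case 4 then show ?thesis using assms
      by (cases "m = 1"; cases "m = 4"; cases "m = N+4"; simp add: Fmap_def Jp_def algebra_simps)
  next
    case 5 then show ?thesis using assms
      by (cases "m = 1"; cases "m = 5"; simp add: Fmap_def Jp_def algebra_simps)
  next
    case 6 then have "i - 1 \<noteq> 1" by linarith
    with 6 show ?thesis using assms
      by (cases "m = 1"; cases "m = i - 1"; cases "m = i"; simp add: Fmap_def Jp_def algebra_simps)
  next
    case 7
    then have h: "i \<noteq> 1" "i \<noteq> 2" "i \<noteq> 3" "i \<noteq> 4" "i \<noteq> 5" "\<not> (6 \<le> i \<and> i \<le> N+5)" by auto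
    have "Fmap N k r al V i = 0" for V unfolding Fmap_def
      by (simp only: if_not_P[OF h(1)] if_not_P[OF h(2)] if_not_P[OF h(3)] if_not_P[OF h(4)] if_not_P[OF h(5)] if_not_P[OF h(6)])
    moreover have "Jp N k U i m = 0" unfolding Jp_def
      by (simp only: if_not_P[OF h(1)] if_not_P[OF h(2)] if_not_P[OF h(3)] if_not_P[OF h(4)] if_not_P[OF h(5)] if_not_P[OF h(6)])
    ultimately show ?thesis by simp
  qed
qed

lemma deriv_affine:
  assumes "\<And>t. f t = c + d * (t::real)"
  shows "deriv f x = d"
proof -
  have "f = (\<lambda>t. c + d * t)" using assms by auto
  moreover have "((\<lambda>t. c + d * t) has_real_derivative d) (at x)"
    by (auto intro!: derivative_eq_intros)
  ultimately show ?thesis using DERIV_imp_deriv by blast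
qed

lemma jac_entry:
  assumes "N \<ge> 1" "i < N+5" "j < N+5"
  shows "jacobian (N+5) (Fmap N k r al) U $$ (i,j) = complex_of_real (Jp N k U (Suc i) (Suc j))"
proof -
  have "deriv (\<lambda>t. Fmap N k r al (U(Suc j := t)) (Suc i)) (U (Suc j)) = Jp N k U (Suc i) (Suc j)"
    by (rule deriv_affine[OF Fmap_affine[OF assms(1)]])
  then show ?thesis using assms unfolding jacobian_def by simp
qed



lemma of_real_if0: "complex_of_real (if P then a else 0) = (if P then complex_of_real a else 0)" by simp

lemma sum_ind: "(\<Sum>j\<in>{0..<n}. (if Suc j = m then c else 0) * ((vec_index v j) :: complex)) = (if 1 \<le> m \<and> m \<le> n then c * (vec_index v (m - 1)) else 0)"
proof -
  have "(\<Sum>j\<in>{0..<n}. (if Suc j = m then c else 0) * ((vec_index v j) :: complex)) = (\<Sum>j\<in>{0..<n}. if j = m - 1 \<and> m \<ge> 1 then c * (vec_index v j) else 0)"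
    by (rule sum.cong) auto
  also have "\<dots> = (if 1 \<le> m \<and> m \<le> n then c * (vec_index v (m - 1)) else 0)"
    by (cases "m \<ge> 1") (auto simp: sum.delta)
  finally show ?thesis .
qed

lemma sum_ind2: "(\<Sum>j\<in>{0..<n}. (if j = p then c else 0) * ((vec_index v j) :: complex)) = (if p < n then c * (vec_index v p) else 0)"
  by (auto simp: sum.delta if_distrib[of "\<lambda>x. x * _"] cong: if_cong)

lemmas rowsimps = Jp_def of_real_add of_real_if0 distrib_right sum.distrib sum_ind sum_ind2

lemma row1: "(\<Sum>j\<in>{0..<N+5}. complex_of_real (Jp N k U 1 (Suc j)) * (vec_index v j)) = of_real(-k*U 2) * (vec_index v 0) + of_real(-k*U 1)*(vec_index v 1) + (vec_index v 2)"
  by (simp add: rowsimps add.commute)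
lemma row2: "(\<Sum>j\<in>{0..<N+5}. complex_of_real (Jp N k U 2 (Suc j)) * (vec_index v j)) = - (vec_index v 1)"
  by (simp add: rowsimps add.commute)
lemma row3: "(\<Sum>j\<in>{0..<N+5}. complex_of_real (Jp N k U 3 (Suc j)) * (vec_index v j)) = of_real(k * U 4 + real N * k * U (N+5)) * (vec_index v 0) - (vec_index v 2) + of_real(k * U 1) * (vec_index v 3) + of_real(real N * k * U 1) * (vec_index v (N+4))"
  by (simp add: rowsimps add.commute)
lemma row4: "N \<ge> 1 \<Longrightarrow> (\<Sum>j\<in>{0..<N+5}. complex_of_real (Jp N k U 4 (Suc j)) * (vec_index v j)) = of_real(k * U (N+4)) * (vec_index v 0) - (vec_index v 3) + of_real(k * U 1) * (vec_index v (N+3))"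
  by (simp add: rowsimps add.commute)
lemma row5: "(\<Sum>j\<in>{0..<N+5}. complex_of_real (Jp N k U 5 (Suc j)) * (vec_index v j)) = of_real(- k * U 5) * (vec_index v 0) + of_real(-1 - k * U 1) * (vec_index v 4)"
  by (simp add: rowsimps add.commute)
lemma row6: "6 \<le> i \<Longrightarrow> i \<le> N+5 \<Longrightarrow> (\<Sum>j\<in>{0..<N+5}. complex_of_real (Jp N k U i (Suc j)) * (vec_index v j)) = of_real(k * (U (i-1) - U i)) * (vec_index v 0) + of_real(k * U 1) * (vec_index v (i-2)) + of_real(-1 - k * U 1) * (vec_index v (i-1))"
  by (simp add: rowsimps numeral_2_eq_2; linarith)

lemma key:
  fixes b g T Y P Q n :: complex
  assumes T: "T = 1 - Y" and g: "g * (1 - Y * b) = T * b" and Q: "(1 - b) * Q = b - P"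
    and b1: "b \<noteq> 1" and T0: "T \<noteq> 0"
  shows "g * ((1 + n*T) + g * (1 - Y*P + T*Q) + n*T*(-Y*b*P + T*(Q+P)))
       = T*(1+n*T)*(Q + P + b*P) - T*b*P + P*g"
proof -
  have yb: "1 - Y * b \<noteq> 0"
  proof
    assume "1 - Y * b = 0"
    then have "T * b = 0" using g by simp
    then have "b = 0" using T0 by simp
    then show False using \<open>1 - Y * b = 0\<close> by simp
  qed
  have b1': "1 - b \<noteq> 0" using b1 by simp
  define G where "G = g * (1 - Y*b)"
  define Qm where "Qm = (1 - b) * Q"
  have L: "((1 - b) * (1 - Y*b)^2) * (g * ((1 + n*T) + g * (1 - Y*P + T*Q) + n*T*(-Y*b*P + T*(Q+P))))
     = (1-b)*(1-Y*b)*G*(1+n*T)+(1-b)*G^2*(1-Y*P)+G^2*T*Qm+(1-b)*(1-Y*b)*n*T*G*(-Y*b*P)+(1-Y*b)*n*T^2*G*Qm+(1-b)*(1-Y*b)*n*T^2*G*P"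
    unfolding G_def Qm_def by (simp add: algebra_simps power2_eq_square)
  have R: "((1 - b) * (1 - Y*b)^2) * (T*(1+n*T)*(Q + P + b*P) - T*b*P + P*g)
     = (1-Y*b)^2*(T*(1+n*T)*(Qm+(1-b)*(P+b*P))-(1-b)*T*b*P)+(1-b)*(1-Y*b)*P*G"
    unfolding G_def Qm_def by (simp add: algebra_simps power2_eq_square)
  have GG: "G = T * b" using g G_def by simp
  have QQ: "Qm = b - P" using Q Qm_def by simp
  have M: "(1-b)*(1-Y*b)*G*(1+n*T)+(1-b)*G^2*(1-Y*P)+G^2*T*Qm+(1-b)*(1-Y*b)*n*T*G*(-Y*b*P)+(1-Y*b)*n*T^2*G*Qm+(1-b)*(1-Y*b)*n*T^2*G*P
     = (1-Y*b)^2*(T*(1+n*T)*(Qm+(1-b)*(P+b*P))-(1-b)*T*b*P)+(1-b)*(1-Y*b)*P*G"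
    unfolding GG QQ T by (simp add: algebra_simps power2_eq_square)
  have "((1 - b) * (1 - Y*b)^2) * (g * ((1 + n*T) + g * (1 - Y*P + T*Q) + n*T*(-Y*b*P + T*(Q+P))))
       = ((1 - b) * (1 - Y*b)^2) * (T*(1+n*T)*(Q + P + b*P) - T*b*P + P*g)"
    using L R M by simp
  then show ?thesis using yb b1' by simp
qed

lemma pN_nonneg:
  assumes "N \<ge> 1" "0 < ystar" "ystar < 1" "pN N ystar = 0"
    "\<forall>z. 0 < z \<and> z < 1 \<and> pN N z = 0 \<longrightarrow> z = ystar" "0 < y" "y \<le> ystar"
  shows "pN N y \<ge> 0"
proof (rule ccontr)
  assume neg: "\<not> pN N y \<ge> 0"
  have p0: "pN N 0 = 1" using assms(1) by (simp add: pN_def)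
  have "continuous_on {0..y} (pN N)" unfolding pN_def by (intro continuous_intros)
  then obtain z where z: "0 \<le> z" "z \<le> y" "pN N z = 0"
    using IVT2'[of "pN N" y 0 0] neg p0 assms(6) by auto
  have "z \<noteq> 0" using z p0 by auto
  then have "z = ystar" using assms z by auto
  moreover have "y \<noteq> ystar" using neg assms(4) by auto
  ultimately show False using z assms(7) by auto
qed

lemma pN_ident:
  "y^N * ((1-y)*(1+real N*(1-y))*real N + real N*(1-y)^2 + 1) = 1 - pN N y"
  unfolding pN_def by (simp add: algebra_simps power2_eq_square)

lemma Bs_Suc: "(\<Sum>j<Suc m. b^(Suc j)) = b + b * (\<Sum>j<m. b^(Suc j))" for b :: complex
  by (simp add: sum.lessThan_Suc_shift sum_distrib_left del: sum.lessThan_Suc)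

lemma Bs_geom: "(1 - b) * (\<Sum>j<m. b^(Suc j)) = b - b^(Suc m)" for b :: complex
proof (induction m)
  case 0
  then show ?case by simp
next
  case (Suc m)
  have "(1 - b) * (\<Sum>j<Suc m. b^(Suc j)) = (1 - b) * (\<Sum>j<m. b^(Suc j)) + (1 - b) * b^(Suc m)"
    by (simp add: distrib_left)
  also have "\<dots> = b - b^(Suc m) + (1 - b) * b^(Suc m)" using Suc by simp
  also have "\<dots> = b - b^(Suc (Suc m))" by (simp add: algebra_simps)
  finally show ?case .
qed

lemma Bs_norm: "norm b \<le> 1 \<Longrightarrow> norm (\<Sum>j<m. b^(Suc j)) \<le> real m" for b :: complex
proof -
  assume "norm b \<le> 1"
  then have "norm (b^(Suc j)) \<le> 1" for j by (simp add: norm_mult norm_power mult_le_one power_le_one)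
  then have "norm (\<Sum>j<m. b^(Suc j)) \<le> (\<Sum>j<m. (1::real))"
    using norm_sum[of "\<lambda>j. b^(Suc j)" "{..<m}"] sum_mono[of "{..<m}" "\<lambda>j. norm (b^(Suc j))" "\<lambda>j. 1"]
    by (meson order_trans)
  then show ?thesis by simp
qed


lemma core:
  fixes X :: "nat \<Rightarrow> complex" and N :: nat and y s \<omega> t a :: real and L :: complex
  assumes N1: "N \<ge> 1" and y0: "0 < y" and y1: "y < 1" and s0: "s > 0" and om: "\<omega> \<noteq> 0"
    and p: "pN N y \<ge> 0"
    and t_def: "t = 1 - y" and a_def: "a = y / t" and L_def: "L = \<i> * complex_of_real \<omega>"
    and E0: "L * X 0 = - of_real s * X 0 - of_real a * X 1 + X 2"
    and E1: "L * X 1 = - X 1"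
    and E2: "L * X 2 = of_real (s*y^N*(1 + real N*t)) * X 0 - X 2 + of_real a * X 3 + of_real (real N*a) * X (N+4)"
    and E3: "L * X 3 = of_real (s*t*y^(N-1)) * X 0 - X 3 + of_real a * X (N+3)"
    and E4: "L * X 4 = - of_real (s*t) * X 0 - (1 + of_real a) * X 4"
    and Ej: "\<And>m. m < N \<Longrightarrow> L * X (m+5) = of_real (s*t^2*y^m) * X 0 + of_real a * X (m+4) - (1 + of_real a) * X (m+5)"
  shows "X 0 = 0 \<and> X 1 = 0 \<and> X 2 = 0 \<and> X 3 = 0 \<and> (\<forall>m\<le>N. X (m+4) = 0)"
proof -
  define T where "T = complex_of_real t"
  define Y where "Y = complex_of_real y"
  define S where "S = complex_of_real s"
  define Aa where "Aa = complex_of_real a"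
  define n where "n = complex_of_nat N"
  have t0: "t > 0" using t_def y1 by simp
  have T0: "T \<noteq> 0" using t0 by (simp add: T_def)
  have Y0: "Y \<noteq> 0" using y0 by (simp add: Y_def)
  have TY: "T + Y = 1" by (simp add: T_def Y_def t_def)
  have AaTY: "Aa = Y / T" by (simp add: Aa_def Y_def T_def a_def)
  have ReTL: "Re (1 + T * L) = 1" by (simp add: T_def L_def)
  have TL0: "1 + T * L \<noteq> 0"
  proof
    assume "1 + T * L = 0"
    then have "Re (1 + T * L) = 0" by simp
    with ReTL show False by simp
  qed
  have ReL: "Re (1 + L) = 1" by (simp add: L_def)
  have L10: "1 + L \<noteq> 0"
  proof
    assume "1 + L = 0"
    then have "Re (1 + L) = 0" by simp
    with ReL show False by simp
  qed
  have L0: "L \<noteq> 0" using om by (simp add: L_def)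
  define b where "b = 1 / (1 + T * L)"
  define g where "g = 1 / (1 + L)"
  have hmu1: "(L + 1 + Aa) * T = 1 + T * L"
  proof -
    have "(L + 1 + Aa) * T = L * T + (T + Y)" using T0 by (simp add: AaTY field_simps)
    also have "\<dots> = 1 + T * L" using TY by (simp add: mult.commute)
    finally show ?thesis .
  qed
  have hmu: "(L + 1 + Aa) * (T * b) = 1"
    using hmu1 TL0 by (simp add: b_def)
  define Bs where "Bs m = (\<Sum>j<m. b^(Suc j))" for m
  define w where "w m = S * T^2 * (T * Bs m * Y^m / Y - Y^m * b^(Suc m))" for m
  have cf: "X (m+4) = X 0 * w m" if "m \<le> N" for m
    using that
  proof (induction m)
    case 0
    have "(L + 1 + Aa) * X 4 = - S * T * X 0" using E4 by (simp add: S_def T_def Aa_def algebra_simps)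
    then have "X 4 = (T * b) * (- S * T * X 0)"
      by (metis hmu mult.assoc mult.commute mult_1)
    then show ?case by (simp add: w_def Bs_def algebra_simps power2_eq_square)
  next
    case (Suc m)
    then have mN: "m < N" by simp
    have IH: "X (m+4) = X 0 * w m" using Suc by simp
    have "(L + 1 + Aa) * X (m+5) = S * T^2 * Y^m * X 0 + Aa * X (m+4)"
      using Ej[OF mN] by (simp add: S_def T_def Y_def Aa_def algebra_simps)
    then have "X (m+5) = (T * b) * (S * T^2 * Y^m * X 0 + Aa * X (m+4))"
      by (metis hmu mult.assoc mult.commute mult_1)
    also have "\<dots> = X 0 * w (Suc m)"
      unfolding IH w_def Bs_def Bs_Suc AaTY using T0 Y0
      by (simp add: field_simps power_Suc)
    finally show ?case by (simp add: add.commute)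
  qed
  have X1: "X 1 = 0" using E1 L10
    by (metis add.commute add_eq_0_iff2 distrib_right mult_1 mult_eq_0_iff)
  define P where "P = b^N"
  define Q where "Q = Bs (N-1)"
  define Z where "Z = Y^(N-1)"
  have NS: "N = Suc (N-1)" using N1 by simp
  have YN: "Y^N = Y * Z" unfolding Z_def by (subst NS) simp
  have BsN: "Bs N = Q + P" unfolding Q_def P_def Bs_def by (subst (1 3) NS) simp
  have bSN: "b^(Suc N) = b * P" by (simp add: P_def)
  have bN: "b^(Suc (N-1)) = P" using NS P_def by simp
  have w1: "w (N-1) = S * T^2 * (T * Q * Z / Y - Z * P)" unfolding w_def bN Q_def Z_def by simp
  have w2: "w N = S * T^2 * (T * (Q+P) * (Y*Z) / Y - (Y*Z) * (b*P))" unfolding w_def BsN YN bSN by simp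
  have e3: "N - 1 + 4 = N + 3" using N1 by simp
  have XN3: "X (N+3) = X 0 * w (N-1)" using cf[of "N-1"] e3 by (simp add: add.commute)
  have XN4: "X (N+4) = X 0 * w N" using cf[of N] by simp
  have X3: "X 3 = X 0 * (g * S * T * Z * (1 - Y*P + T*Q))"
  proof -
    have "(1 + L) * X 3 = S * T * Z * X 0 + Aa * X (N+3)"
      using E3 by (simp add: S_def T_def Z_def Y_def Aa_def algebra_simps)
    then have "X 3 = g * (S * T * Z * X 0 + Aa * X (N+3))"
      using L10 by (simp add: g_def field_simps)
    also have "\<dots> = X 0 * (g * S * T * Z * (1 - Y*P + T*Q))"
      unfolding XN3 w1 AaTY using T0 Y0 by (simp add: field_simps power2_eq_square)
    finally show ?thesis .
  qed
  have X2: "X 2 = X 0 * S * Y * Z * (g * ((1 + n*T) + g*(1 - Y*P + T*Q) + n*T*(-Y*b*P + T*(Q+P))))"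
  proof -
    have "(1 + L) * X 2 = S * Y^N * (1 + n*T) * X 0 + Aa * X 3 + n * Aa * X (N+4)"
      using E2 by (simp add: S_def T_def Y_def Aa_def n_def algebra_simps)
    then have "X 2 = g * (S * Y^N * (1 + n*T) * X 0 + Aa * X 3 + n * Aa * X (N+4))"
      using L10 by (simp add: g_def field_simps)
    also have "\<dots> = X 0 * S * Y * Z * (g * ((1 + n*T) + g*(1 - Y*P + T*Q) + n*T*(-Y*b*P + T*(Q+P))))"
      unfolding X3 XN4 w2 AaTY YN using T0 Y0 by (simp add: field_simps power2_eq_square)
    finally show ?thesis .
  qed
  have T1: "T = 1 - Y" using TY by (simp add: algebra_simps)
  have gb: "g * (1 - Y*b) = T*b"
  proof -
    have "g * (1 - Y*b) = (1 + T*L - Y) / ((1 + L) * (1 + T*L))"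
      using L10 TL0 by (simp add: g_def b_def field_simps)
    also have "1 + T*L - Y = T * (1 + L)" using T1 by (simp add: algebra_simps)
    finally show ?thesis using L10 TL0 by (simp add: b_def)
  qed
  have b1: "b \<noteq> 1"
  proof
    assume "b = 1"
    then have "1 + T*L = 1" using TL0 by (simp add: b_def field_simps)
    then show False using T0 L0 by simp
  qed
  have Qg: "(1 - b) * Q = b - P" using Bs_geom[of b "N-1"] bN by (simp add: Q_def Bs_def)
  have keyeq: "g * ((1 + n*T) + g * (1 - Y*P + T*Q) + n*T*(-Y*b*P + T*(Q+P)))
       = T*(1+n*T)*(Q + P + b*P) - T*b*P + P*g"
    by (rule key[OF T1 gb Qg b1 T0])
  define Hc where "Hc = Y * Z * (T*(1+n*T)*(Q + P + b*P) - T*b*P + P*g)"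
  have X2H: "X 2 = X 0 * S * Hc" using X2 unfolding keyeq Hc_def by (simp add: mult.assoc)
  have E0': "X 0 * (L + S - S * Hc) = 0" using E0 X1 X2H by (simp add: S_def algebra_simps)
  have nTL: "1 \<le> norm (1 + T*L)" using abs_Re_le_cmod[of "1 + T*L"] ReTL by simp
  have nb: "norm b \<le> 1"
  proof -
    have "0 < norm (1 + T*L)" using nTL by linarith
    then show ?thesis using nTL by (simp add: b_def norm_divide)
  qed
  have nL: "norm (1 + L) = sqrt (1 + \<omega>^2)"
  proof -
    have "1 + L = Complex 1 \<omega>" by (simp add: L_def complex_eq_iff)
    then show ?thesis by (simp add: complex_norm)
  qed
  have h: "1 < sqrt (1 + \<omega>^2)" using om by simp
  have "norm g = 1 / sqrt (1 + \<omega>^2)" using nL by (simp add: g_def norm_divide)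
  moreover have sp: "0 < sqrt (1 + \<omega>^2)" using h by linarith
  moreover have "1 / sqrt (1 + \<omega>^2) < 1" by (subst divide_less_eq_1_pos[OF sp]) (rule h)
  ultimately have ng: "norm g < 1" by simp
  have Hc2: "Hc = Y^N * (T*(1+n*T)*Bs N + n*T^2*(b*P) + P*g)"
    unfolding Hc_def YN BsN by (simp add: algebra_simps power2_eq_square)
  have h1: "norm (T*(1+n*T)*Bs N) \<le> t*(1+N*t)*N"
  proof -
    have e: "T*(1+n*T)*Bs N = complex_of_real (t*(1+N*t)) * Bs N" by (simp add: T_def n_def)
    have "norm (T*(1+n*T)*Bs N) = t*(1+N*t) * norm (Bs N)"
      unfolding e norm_mult norm_of_real using t0 by simp
    also have "\<dots> \<le> t*(1+N*t) * N"
      using Bs_norm[OF nb, of N] t0 unfolding Bs_def by (intro mult_left_mono) auto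
    finally show ?thesis .
  qed
  have h2: "norm (n*T^2*(b*P)) \<le> N*t^2"
  proof -
    have "norm (n*T^2*(b*P)) = N*t^2 * (norm b)^(Suc N)"
      using t0 by (simp add: n_def T_def P_def norm_mult norm_power)
    also have "\<dots> \<le> N*t^2 * 1"
      using nb by (intro mult_left_mono power_le_one) auto
    finally show ?thesis by simp
  qed
  have h3: "norm (P*g) < 1"
  proof -
    have "norm P \<le> 1" using nb by (simp add: P_def norm_power power_le_one)
    then have "norm (P*g) \<le> norm g" by (simp add: norm_mult mult_left_le_one_le)
    then show ?thesis using ng by simp
  qed
  have nY: "norm (Y^N) = y^N" using y0 by (simp add: Y_def norm_power)
  have "norm Hc \<le> y^N * (norm (T*(1+n*T)*Bs N) + norm (n*T^2*(b*P)) + norm (P*g))"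
  proof -
    have tri: "norm (T*(1+n*T)*Bs N + n*T^2*(b*P) + P*g) \<le> norm (T*(1+n*T)*Bs N) + norm (n*T^2*(b*P)) + norm (P*g)"
      using norm_triangle_ineq[of "T*(1+n*T)*Bs N + n*T^2*(b*P)" "P*g"] norm_triangle_ineq[of "T*(1+n*T)*Bs N" "n*T^2*(b*P)"]
      by linarith
    show ?thesis unfolding Hc2 norm_mult[of "Y^N"] nY using y0 tri by (intro mult_left_mono) auto
  qed
  also have "\<dots> < y^N * (t*(1+N*t)*N + N*t^2 + 1)"
    using h1 h2 h3 y0 by (intro mult_strict_left_mono) auto
  also have "\<dots> = 1 - pN N y" using pN_ident[of y N] unfolding t_def by simp
  also have "\<dots> \<le> 1" using p by simp
  finally have nHc: "norm Hc < 1" .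
  have "Re (L + S - S * Hc) = s - s * Re Hc" by (simp add: L_def S_def)
  also have "\<dots> \<ge> s - s * norm Hc" using s0 complex_Re_le_cmod[of Hc] by (simp add: mult_left_mono)
  moreover have "s * norm Hc < s" using nHc s0 by simp
  ultimately have "Re (L + S - S * Hc) > 0" by linarith
  then have "L + S - S * Hc \<noteq> 0"
  proof (intro notI)
    assume z: "L + S - S * Hc = 0"
    assume "0 < Re (L + S - S * Hc)"
    then show False unfolding z by simp
  qed
  then have X0: "X 0 = 0" using E0' by simp
  show ?thesis using X0 X1 X2H X3 cf by simp
qed

theorem lemma3p3:
  fixes N :: nat and k r ystar y :: real
  assumes "N \<ge> 1" and "k > 0" and "r > 0"
    and "0 < ystar" and "ystar < 1" and "pN N ystar = 0"
    and "\<forall>z. 0 < z \<and> z < 1 \<and> pN N z = 0 \<longrightarrow> z = ystar"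
    and "0 < y" and "y \<le> ystar"
  shows "\<forall>\<omega>::real. \<omega> \<noteq> 0 \<longrightarrow>
     \<not> eigenvalue (jacobian (N+5) (Fmap N k r (r * FtildeN N y)) (Ueq N k r y))
                  (\<i> * complex_of_real \<omega>)"
proof (intro allI impI)
  fix \<omega> :: real assume om: "\<omega> \<noteq> 0"
  have N1: "N \<ge> 1" and k0: "k > 0" and r0: "r > 0" and y0: "0 < y" using assms by auto
  have y1: "y < 1" using assms by linarith
  have p: "pN N y \<ge> 0" using pN_nonneg[OF assms(1,4,5,6,7,8,9)] .
  define U where "U = Ueq N k r y"
  define t where "t = 1 - y"
  define a where "a = y / t"
  define s where "s = k * r"
  define L where "L = \<i> * complex_of_real \<omega>"
  define Jm where "Jm = jacobian (N+5) (Fmap N k r (r * FtildeN N y)) U"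
  have s0: "s > 0" using k0 r0 by (simp add: s_def)
  have t0: "t > 0" using y1 by (simp add: t_def)
  show "\<not> eigenvalue (jacobian (N+5) (Fmap N k r (r * FtildeN N y)) (Ueq N k r y)) (\<i> * complex_of_real \<omega>)"
  proof
    assume "eigenvalue (jacobian (N+5) (Fmap N k r (r * FtildeN N y)) (Ueq N k r y)) (\<i> * complex_of_real \<omega>)"
    then obtain v where v: "v \<in> carrier_vec (N+5)" "v \<noteq> 0\<^sub>v (N+5)" "Jm *\<^sub>v v = L \<cdot>\<^sub>v v"
      unfolding eigenvalue_def eigenvector_def Jm_def U_def L_def by (auto simp: jacobian_def)
    have dv: "dim_vec v = N+5" using v(1) by simp
    have dJ: "dim_row Jm = N+5" "dim_col Jm = N+5" by (simp_all add: Jm_def jacobian_def)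
    have rowi: "(\<Sum>j\<in>{0..<N+5}. complex_of_real (Jp N k U (i+1) (Suc j)) * vec_index v j) = L * vec_index v i"
      if i: "i < N+5" for i
    proof -
      have "vec_index (Jm *\<^sub>v v) i = vec_index (L \<cdot>\<^sub>v v) i" using v(3) by simp
      also have "\<dots> = L * vec_index v i" using i dv by simp
      finally have e: "vec_index (Jm *\<^sub>v v) i = L * vec_index v i" .
      have "vec_index (Jm *\<^sub>v v) i = (\<Sum>j\<in>{0..<N+5}. Jm $$ (i, j) * vec_index v j)"
        using i dJ dv by (simp add: scalar_prod_def)
      also have "\<dots> = (\<Sum>j\<in>{0..<N+5}. complex_of_real (Jp N k U (i+1) (Suc j)) * vec_index v j)"
        by (rule sum.cong) (auto simp: Jm_def jac_entry[OF N1 i])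
      finally show ?thesis using e by simp
    qed
    define X where "X = vec_index v"
    have kne: "k \<noteq> 0" using k0 by simp
    have U1: "k * U 1 = a" using kne by (simp add: U_def Ueq_def a_def t_def)
    have U2: "U 2 = r" by (simp add: U_def Ueq_def)
    have U4: "U 4 = r * y^N" by (simp add: U_def Ueq_def)
    have U5: "U 5 = r * t" by (simp add: U_def Ueq_def t_def)
    have UN4: "U (N+4) = r * t * y^(N-1)" using N1 by (simp add: U_def Ueq_def t_def)
    have UN5: "U (N+5) = r * t * y^N" by (simp add: U_def Ueq_def t_def)
    have Um: "U (m+5) = r * t * y^m" if "m \<le> N" for m using that by (simp add: U_def Ueq_def t_def)
    have E0: "L * X 0 = - of_real s * X 0 - of_real a * X 1 + X 2"
    proof -
      have "- k * U 2 = - s" "- k * U 1 = - a" using U1 U2 by (simp_all add: s_def)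
      then show ?thesis using rowi[of 0] row1[of N k U v] by (simp add: X_def)
    qed
    have E1: "L * X 1 = - X 1"
      using rowi[of 1] row2[of N k U v] by (simp add: X_def numeral_2_eq_2)
    have E2: "L * X 2 = of_real (s*y^N*(1 + real N*t)) * X 0 - X 2 + of_real a * X 3 + of_real (real N*a) * X (N+4)"
    proof -
      have f: "k * U 4 + real N * k * U (N+5) = s*y^N*(1 + real N*t)"
        unfolding U4 UN5 s_def by (simp add: algebra_simps)
      have g: "real N * k * U 1 = real N * a" using U1 by simp
      show ?thesis using rowi[of 2] row3[of N k U v] unfolding f g U1 by (simp add: X_def)
    qed
    have E3: "L * X 3 = of_real (s*t*y^(N-1)) * X 0 - X 3 + of_real a * X (N+3)"
    proof -
      have f: "k * U (N+4) = s*t*y^(N-1)" unfolding UN4 s_def by (simp add: algebra_simps)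
      show ?thesis using rowi[of 3] row4[OF N1, of k U v] unfolding f U1 by (simp add: X_def)
    qed
    have E4: "L * X 4 = - of_real (s*t) * X 0 - (1 + of_real a) * X 4"
    proof -
      have f: "- k * U 5 = - (s*t)" unfolding U5 s_def by (simp add: algebra_simps)
      have g: "-1 - k * U 1 = - (1 + a)" using U1 by simp
      have r: "L * X 4 = complex_of_real (-(s*t)) * X 0 + complex_of_real (-(1+a)) * X 4"
        using rowi[of 4] row5[of N k U v] unfolding f g by (simp add: X_def)
      show ?thesis unfolding r by (simp add: algebra_simps)
    qed
    have Ej: "L * X (m+5) = of_real (s*t^2*y^m) * X 0 + of_real a * X (m+4) - (1 + of_real a) * X (m+5)"
      if mN: "m < N" for m
    proof -
      have e1: "m + 6 - 1 = m + 5" "m + 6 - 2 = m + 4" by simp_all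
      have u5: "U (m+5) = r*t*y^m" using Um[of m] mN by simp
      have u6: "U (m+6) = r*t*y^(Suc m)" using Um[of "m+1"] mN by (simp add: add.commute)
      have f: "k * (U (m+5) - U (m+6)) = s*t^2*y^m"
        unfolding u5 u6 s_def t_def by (simp add: algebra_simps power2_eq_square)
      have g: "-1 - k * U 1 = - (1 + a)" using U1 by simp
      have r6: "(\<Sum>j\<in>{0..<N+5}. complex_of_real (Jp N k U (m+6) (Suc j)) * vec_index v j) = L * vec_index v (m+5)"
        using rowi[of "m+5"] mN by (simp add: add.commute)
      show ?thesis using r6 row6[of "m+6" N k U v] mN unfolding e1 f g U1 by (simp add: X_def algebra_simps)
    qed
    have Z: "X 0 = 0 \<and> X 1 = 0 \<and> X 2 = 0 \<and> X 3 = 0 \<and> (\<forall>m\<le>N. X (m+4) = 0)"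
      by (rule core[OF N1 y0 y1 s0 om p t_def a_def L_def E0 E1 E2 E3 E4 Ej])
    have "v = 0\<^sub>v (N+5)"
    proof (rule eq_vecI)
      show "dim_vec v = dim_vec (0\<^sub>v (N+5) :: complex vec)" using dv by simp
      fix i assume "i < dim_vec (0\<^sub>v (N+5) :: complex vec)"
      then have i: "i < N+5" by simp
      have "X i = 0"
      proof (cases "i < 4")
        case True
        then have "i = 0 \<or> i = 1 \<or> i = 2 \<or> i = 3" by auto
        then show ?thesis using Z by auto
      next
        case False
        then have "i = (i - 4) + 4" "i - 4 \<le> N" using i by auto
        then show ?thesis using Z by metis
      qed
      then show "vec_index v i = vec_index (0\<^sub>v (N+5)) i" using i by (simp add: X_def)
    qed
    with v(2) show False by simp
  qed
qed

end
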